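(* Let $\Gamma$ be a finitely generated discrete group with finite symmetric generating set $Q$, and let $Z\subseteq\mathrm{Sub}(\Gamma)$ be a uniformly recurrent subgroup of $\Gamma$. For any $H,H'\in Z$, the topological groupoids $\mathcal{G}_H$ and $\mathcal{G}_{H'}$ (defined in the context) are isomorphic.
   Context: Word length $l(\gamma)$ is taken with respect to $Q$. $\mathrm{Sub}(\Gamma)$ is the space of subgroups of $\Gamma$ with the topology of pointwise convergence of indicator functions, with $\Gamma$ acting by conjugation $\gamma.H=\gamma H\gamma^{-1}$. A uniformly recurrent subgroup (URS) is a nonempty closed $\Gamma$-invariant subset $Z\subseteq\mathrm{Sub}(\Gamma)$ on which every $\Gamma$-orbit is dense. For $H\le\Gamma$, the Schreier graph $S(H)=S_\Gamma^Q(H)$ is the rooted labeled graph with vertex set $\Gamma/H$, root $H$, and for each $\gamma H\in\Gamma/H$ and $q\in Q$ an edge from $\gamma H$ to $q\gamma H$ labeled $q$; $d$ is the shortest-path metric and $B_n(S,p)$ the ball of radius $n$ around a vertex $p$. Two rooted labeled balls are root-label isomorphic if there is a graph isomorphism between them preserving roots and labels (such an isomorphism is unique). Construction of $\mathcal{G}_H$ for $H\in Z$: write $S=S(H)$. For $p\in\Gamma/H$ and $n\ge 0$ let $[p]_n$ be the root-label isomorphism class of the rooted labeled ball $(B_n(S,p),p)$, and let $E_n=\{[p]_n: p\in\Gamma/H\}$ (a finite discrete set), with maps $E_{n+1}\to E_n$, $[p]_{n+1}\mapsto[p]_n$. Let $\mathcal{G}_H^0=\varprojlim E_n$. For $x=(x_n)\in\mathcal{G}_H^0$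 choose vertices $p_n\in\Gamma/H$ with $x_n=[p_n]_n$. The arrows of $\mathcal{G}_H$ are equivalence classes of pairs $(x,\gamma)$ with $x\in\mathcal{G}_H^0$, $\gamma\in\Gamma$, where $(x,\gamma)\sim(x,\gamma')$ iff $\gamma p_n=\gamma' p_n$ for all sufficiently large $n$ (independent of choices). Range $r(x,\gamma)=x$; source $s(x,\gamma)=\gamma.x$, where $(\gamma.x)_n=[\gamma p_{n+l(\gamma)}]_n$; product $(x,\gamma')(\gamma'.x,\gamma)=(x,\gamma\gamma')$; inverse $(x,\gamma)^{-1}=(\gamma.x,\gamma^{-1})$; units are $(x,e)$. The topology on $\mathcal{G}_H$ is generated by the sets $U_{c,\gamma}=\{(x,\gamma): x_N=c\}$ for $N\in\mathbb{N}$, $c\in E_N$, $\gamma\in\Gamma$ with $l(\gamma)\le N$. *)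

theory Defs
  imports "HOL-Analysis.Analysis"
begin

text \<open>The discrete group Gamma is the whole of a type of class group_add (written additively,
  not necessarily commutative). Q is the finite symmetric generating set.\<close>

definition generates :: "'g::group_add set \<Rightarrow> bool" where
  "generates Q \<longleftrightarrow> (\<forall>g. \<exists>xs. set xs \<subseteq> Q \<and> sum_list xs = g)"

definition fin_sym_gen :: "'g::group_add set \<Rightarrow> bool" where
  "fin_sym_gen Q \<longleftrightarrow> finite Q \<and> (\<forall>q\<in>Q. - q \<in> Q) \<and> generates Q"

definition wlen :: "'g::group_add set \<Rightarrow> 'g \<Rightarrow> nat" where
  "wlen Q g = (LEAST k. \<exists>xs. length xs = k \<and> set xs \<subseteq> Q \<and> sum_list xs = g)"

definition is_subgroup :: "'g::group_add set \<Rightarrow> bool" where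
  "is_subgroup H \<longleftrightarrow> 0 \<in> H \<and> (\<forall>a\<in>H. \<forall>b\<in>H. a + b \<in> H) \<and> (\<forall>a\<in>H. - a \<in> H)"

text \<open>Sub(Gamma) with the topology of pointwise convergence of indicator functions\<close>
definition Sub_top :: "'g::group_add set topology" where
  "Sub_top = pullback_topology {H. is_subgroup H} (\<lambda>H x. x \<in> H)
      (product_topology (\<lambda>_. discrete_topology UNIV) UNIV)"

definition conj :: "'g::group_add \<Rightarrow> 'g set \<Rightarrow> 'g set" where
  "conj g H = (\<lambda>h. g + h + - g) ` H"

definition URS :: "'g::group_add set set \<Rightarrow> bool" where
  "URS Z \<longleftrightarrow> Z \<noteq> {} \<and> Z \<subseteq> topspace Sub_top \<and> closedin Sub_top Z
     \<and> (\<forall>g. \<forall>H\<in>Z. conj g H \<in> Z)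
     \<and> (\<forall>H\<in>Z. Z \<subseteq> Sub_top closure_of (range (\<lambda>g. conj g H)))"

text \<open>vertices: left cosets gH; the generator q acts by p \<mapsto> qp\<close>
definition cosets :: "'g::group_add set \<Rightarrow> 'g set set" where
  "cosets H = range (\<lambda>g. (\<lambda>h. g + h) ` H)"

definition act :: "'g::group_add \<Rightarrow> 'g set \<Rightarrow> 'g set" where
  "act g p = (\<lambda>x. g + x) ` p"

text \<open>shortest path distance: following the edges labelled q1,...,qk from p leads to
  qk...q1 p\<close>
definition sdist :: "'g::group_add set \<Rightarrow> 'g set \<Rightarrow> 'g set \<Rightarrow> nat" where
  "sdist Q p p' = (LEAST k. \<exists>xs. length xs = k \<and> set xs \<subseteq> Q \<and> act (sum_list (rev xs)) p = p')"

definition sball :: "'g::group_add set \<Rightarrow> 'g set \<Rightarrow> nat \<Rightarrow> 'g set \<Rightarrow> 'g set set" where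
  "sball Q H n p = {v \<in> cosets H. sdist Q p v \<le> n}"

text \<open>root-label isomorphism of the rooted labelled balls (induced labelled subgraphs)\<close>
definition ball_iso :: "'g::group_add set \<Rightarrow> 'g set \<Rightarrow> nat \<Rightarrow> 'g set \<Rightarrow> 'g set \<Rightarrow> bool" where
  "ball_iso Q H n p p' \<longleftrightarrow> (\<exists>f. bij_betw f (sball Q H n p) (sball Q H n p') \<and> f p = p' \<and>
     (\<forall>u\<in>sball Q H n p. \<forall>v\<in>sball Q H n p. \<forall>q\<in>Q. v = act q u \<longleftrightarrow> f v = act q (f u)))"

text \<open>the isomorphism class [p]_n, represented as the set of vertices whose n-ball is
  root-label isomorphic to that of p\<close>
definition cls :: "'g::group_add set \<Rightarrow> 'g set \<Rightarrow> nat \<Rightarrow> 'g set \<Rightarrow> 'g set set" where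
  "cls Q H n p = {p' \<in> cosets H. ball_iso Q H n p p'}"

definition En :: "'g::group_add set \<Rightarrow> 'g set \<Rightarrow> nat \<Rightarrow> 'g set set set" where
  "En Q H n = cls Q H n ` cosets H"

text \<open>unit space: inverse limit of the E_n along [p]_(n+1) \<mapsto> [p]_n\<close>
definition G0 :: "'g::group_add set \<Rightarrow> 'g set \<Rightarrow> (nat \<Rightarrow> 'g set set) set" where
  "G0 Q H = {x. (\<forall>n. x n \<in> En Q H n) \<and>
                (\<forall>n. \<exists>p \<in> cosets H. x (Suc n) = cls Q H (Suc n) p \<and> x n = cls Q H n p)}"

definition rep :: "(nat \<Rightarrow> 'g set set) \<Rightarrow> nat \<Rightarrow> 'g set" where
  "rep x n = (SOME p. p \<in> x n)"

definition arr_rel :: "(nat \<Rightarrow> 'g::group_add set set) \<Rightarrow> 'g \<Rightarrow> 'g \<Rightarrow> bool" where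
  "arr_rel x g g' \<longleftrightarrow> (\<exists>N. \<forall>n\<ge>N. act g (rep x n) = act g' (rep x n))"

text \<open>an arrow [(x,g)] is represented as the pair of x and the class of g\<close>
type_synonym 'g arrow = "(nat \<Rightarrow> 'g set set) \<times> 'g set"

definition mk_arr :: "(nat \<Rightarrow> 'g::group_add set set) \<Rightarrow> 'g \<Rightarrow> 'g arrow" where
  "mk_arr x g = (x, {g'. arr_rel x g g'})"

definition arrows :: "'g::group_add set \<Rightarrow> 'g set \<Rightarrow> 'g arrow set" where
  "arrows Q H = {mk_arr x g | x g. x \<in> G0 Q H}"

definition pt_act :: "'g::group_add set \<Rightarrow> 'g set \<Rightarrow> 'g \<Rightarrow> (nat \<Rightarrow> 'g set set) \<Rightarrow> (nat \<Rightarrow> 'g set set)" where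
  "pt_act Q H g x = (\<lambda>n. cls Q H n (act g (rep x (n + wlen Q g))))"

definition elt :: "'g arrow \<Rightarrow> 'g" where
  "elt a = (SOME g. g \<in> snd a)"

definition rng :: "'g arrow \<Rightarrow> (nat \<Rightarrow> 'g set set)" where
  "rng a = fst a"

definition src :: "'g::group_add set \<Rightarrow> 'g set \<Rightarrow> 'g arrow \<Rightarrow> (nat \<Rightarrow> 'g set set)" where
  "src Q H a = pt_act Q H (elt a) (fst a)"

text \<open>(x,g')(g'.x,g) = (x, g g')\<close>
definition gmul :: "'g::group_add arrow \<Rightarrow> 'g arrow \<Rightarrow> 'g arrow" where
  "gmul a b = mk_arr (fst a) (elt b + elt a)"

definition basic_opens :: "'g::group_add set \<Rightarrow> 'g set \<Rightarrow> 'g arrow set set" where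
  "basic_opens Q H = {{a \<in> arrows Q H. \<exists>x. a = mk_arr x g \<and> x N = c} | N c g.
                        c \<in> En Q H N \<and> wlen Q g \<le> N}"

definition Gtop :: "'g::group_add set \<Rightarrow> 'g set \<Rightarrow> 'g arrow topology" where
  "Gtop Q H = subtopology (topology_generated_by (basic_opens Q H)) (arrows Q H)"

definition groupoid_iso :: "'g::group_add set \<Rightarrow> 'g set \<Rightarrow> 'g set \<Rightarrow> ('g arrow \<Rightarrow> 'g arrow) \<Rightarrow> bool" where
  "groupoid_iso Q H H' f \<longleftrightarrow>
     bij_betw f (arrows Q H) (arrows Q H') \<and>
     homeomorphic_map (Gtop Q H) (Gtop Q H') f \<and>
     (\<forall>a\<in>arrows Q H. \<forall>b\<in>arrows Q H.
        (src Q H a = rng b \<longleftrightarrow> src Q H' (f a) = rng (f b)) \<and>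
        (src Q H a = rng b \<longrightarrow> f (gmul a b) = gmul (f a) (f b)))"

definition groupoids_isomorphic :: "'g::group_add set \<Rightarrow> 'g set \<Rightarrow> 'g set \<Rightarrow> bool" where
  "groupoids_isomorphic Q H H' \<longleftrightarrow> (\<exists>f. groupoid_iso Q H H' f)"

end

theory Submission
  imports Defs
begin
definition stab :: "'g::group_add set \<Rightarrow> 'g set" where "stab p = {g. act g p = p}"
definition cl :: "'g::group_add set \<Rightarrow> 'g \<Rightarrow> 'g set" where "cl K g = {g'. - g' + g \<in> K}"

lemma act_add: "act (a+b) p = act a (act b p)"
  unfolding act_def by (auto simp: image_image add.assoc)
lemma act_0[simp]: "act 0 p = p" by (simp add: act_def)
lemma act_eq: "act a p = act b p \<longleftrightarrow> act (-b + a) p = p"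
proof
  assume "act a p = act b p"
  then have "act (-b + a) p = act (-b + b) p" by (simp only: act_add)
  then show "act (-b + a) p = p" by simp
next
  assume "act (-b + a) p = p"
  then have "act b (act (-b + a) p) = act b p" by simp
  then show "act a p = act b p" by (simp add: act_add[symmetric] add.assoc[symmetric])
qed

lemma act_coset: "act g ((\<lambda>h. a + h) ` H) = (\<lambda>h. g + a + h) ` H"
  unfolding act_def by (auto simp: image_image add.assoc)

lemma cosets_act: "p \<in> cosets H \<Longrightarrow> act g p \<in> cosets H"
  unfolding cosets_def by (auto simp: act_coset)

lemma conj_iff: "g \<in> conj a K \<longleftrightarrow> -a + g + a \<in> K"
proof
  assume "g \<in> conj a K" then obtain h where "h \<in> K" "g = a + h + -a" unfolding conj_def by auto
  then show "-a + g + a \<in> K" by (simp add: add.assoc)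
next
  assume "-a + g + a \<in> K"
  moreover have "g = a + (-a + g + a) + -a" by (simp add: add.assoc)
  ultimately show "g \<in> conj a K" unfolding conj_def by blast
qed

lemma stab_act: "h \<in> stab (act g p) \<longleftrightarrow> -g + h + g \<in> stab p"
proof -
  have "act h (act g p) = act g p \<longleftrightarrow> act (h + g) p = act g p" by (simp add: act_add)
  also have "\<dots> \<longleftrightarrow> act (-g + (h + g)) p = p" by (rule act_eq)
  finally show ?thesis by (simp add: stab_def add.assoc)
qed

lemma stab_coset:
  assumes "is_subgroup H"
  shows "stab ((\<lambda>h. a + h) ` H) = conj a H"
proof -
  have key: "(\<lambda>h. g + h) ` H = H \<longleftrightarrow> g \<in> H" for g
  proof
    assume "(\<lambda>h. g + h) ` H = H"
    moreover have "g + 0 \<in> (\<lambda>h. g + h) ` H" using assms unfolding is_subgroup_def by blast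
    ultimately show "g \<in> H" by simp
  next
    assume g: "g \<in> H"
    show "(\<lambda>h. g + h) ` H = H"
    proof
      show "(\<lambda>h. g + h) ` H \<subseteq> H" using g assms unfolding is_subgroup_def by blast
      show "H \<subseteq> (\<lambda>h. g + h) ` H"
      proof
        fix x assume "x \<in> H"
        then have "-g + x \<in> H" using g assms unfolding is_subgroup_def by blast
        moreover have "x = g + (-g + x)" by (simp add: add.assoc[symmetric])
        ultimately show "x \<in> (\<lambda>h. g + h) ` H" by blast
      qed
    qed
  qed
  have "stab ((\<lambda>h. a + h) ` H) = stab (act a H)"
    by (simp add: act_def)
  moreover have "stab H = H"
    unfolding stab_def act_def using key by auto
  ultimately show ?thesis
    by (auto simp: stab_act conj_iff)
qed

lemma sum_rev_neg: "sum_list (rev (map uminus xs)) = - sum_list (xs :: 'g::group_add list)"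
  by (induction xs) (auto simp: minus_add)

locale gq = fixes Q :: "'g::group_add set" assumes fsg: "fin_sym_gen Q"
begin

definition W :: "nat \<Rightarrow> 'g set" where
  "W n = {g. \<exists>xs. length xs \<le> n \<and> set xs \<subseteq> Q \<and> sum_list xs = g}"
definition D :: "nat \<Rightarrow> 'g set" where "D n = W (2*n+1)"
definition S :: "nat \<Rightarrow> 'g set \<Rightarrow> 'g set" where "S n p = stab p \<inter> D n"

lemma W_0[simp]: "0 \<in> W n" unfolding W_def by (rule CollectI, rule exI[of _ "[]"]) auto

lemma W_mono: "n \<le> m \<Longrightarrow> W n \<subseteq> W m" unfolding W_def using le_trans by blast

lemma W_add: "a \<in> W n \<Longrightarrow> b \<in> W m \<Longrightarrow> a + b \<in> W (n + m)"
proof -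
  assume "a \<in> W n" "b \<in> W m"
  then obtain xs ys where "length xs \<le> n" "set xs \<subseteq> Q" "sum_list xs = a"
     "length ys \<le> m" "set ys \<subseteq> Q" "sum_list ys = b" unfolding W_def by auto
  then show ?thesis unfolding W_def by (intro CollectI exI[of _ "xs @ ys"]) auto
qed

lemma W_Q: "q \<in> Q \<Longrightarrow> q \<in> W 1"
  unfolding W_def by (intro CollectI exI[of _ "[q]"]) auto

lemma Q_sym: "q \<in> Q \<Longrightarrow> -q \<in> Q" using fsg unfolding fin_sym_gen_def by auto

lemma W_uminus: "a \<in> W n \<Longrightarrow> -a \<in> W n"
proof -
  assume "a \<in> W n"
  then obtain xs where "length xs \<le> n" "set xs \<subseteq> Q" "sum_list xs = a" unfolding W_def by auto
  then show ?thesis unfolding W_def using Q_sym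
    by (intro CollectI exI[of _ "rev (map uminus xs)"]) (auto simp: sum_rev_neg)
qed

lemma W_ex: "\<exists>n. g \<in> W n"
proof -
  obtain xs where "set xs \<subseteq> Q" "sum_list xs = g"
    using fsg unfolding fin_sym_gen_def generates_def by blast
  then show ?thesis unfolding W_def by blast
qed

lemma W_wlen: "g \<in> W (wlen Q g)"
proof -
  obtain xs where xs: "set xs \<subseteq> Q" "sum_list xs = g"
    using fsg unfolding fin_sym_gen_def generates_def by blast
  let ?P = "\<lambda>k. \<exists>xs. length xs = k \<and> set xs \<subseteq> Q \<and> sum_list xs = g"
  have "?P (length xs)" using xs by blast
  then have "?P (wlen Q g)" unfolding wlen_def by (rule LeastI)
  then show ?thesis unfolding W_def by (metis (mono_tags, lifting) CollectI order_refl)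
qed

lemma W_D: "g \<in> W n \<Longrightarrow> g \<in> D n" unfolding D_def using W_mono[of n "2*n+1"] by auto

lemma D_mono: "n \<le> m \<Longrightarrow> D n \<subseteq> D m" unfolding D_def by (rule W_mono) simp

lemma D_ex: "\<exists>n. g \<in> D n" using W_ex W_D by blast

lemma D_ge: "\<exists>N. \<forall>n\<ge>N. g \<in> D n" using D_ex D_mono by blast

lemma finite_W: "finite (W n)"
proof -
  have "W n \<subseteq> sum_list ` {xs. set xs \<subseteq> Q \<and> length xs \<le> n}" unfolding W_def by auto
  moreover have "finite {xs. set xs \<subseteq> Q \<and> length xs \<le> n}"
    using fsg finite_lists_length_le unfolding fin_sym_gen_def by blast
  ultimately show ?thesis using finite_surj by blast
qed

lemma finite_D: "finite (D n)" unfolding D_def by (rule finite_W)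

lemma W_split: "g \<in> W (2*n+1) \<Longrightarrow> \<exists>L\<in>W n. \<exists>R\<in>W n. g = L + R \<or> (\<exists>q\<in>Q. g = L + (q + R))"
proof -
  assume "g \<in> W (2*n+1)"
  then obtain xs where xs: "length xs \<le> 2*n+1" "set xs \<subseteq> Q" "sum_list xs = g" unfolding W_def by auto
  show ?thesis
  proof (cases "length xs \<le> 2*n")
    case True
    have "xs = take n xs @ drop n xs" by simp
    then have "g = sum_list (take n xs) + sum_list (drop n xs)" using xs
      by (metis sum_list_append)
    moreover have "sum_list (take n xs) \<in> W n" unfolding W_def using xs set_take_subset
      by (intro CollectI exI[of _ "take n xs"]) (use set_take_subset[of n xs] in auto)
    moreover have "sum_list (drop n xs) \<in> W n" unfolding W_def using xs set_drop_subset True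
      by (intro CollectI exI[of _ "drop n xs"]) fastforce
    ultimately show ?thesis by blast
  next
    case False
    then have len: "length xs = 2*n+1" using xs by simp
    then have "n < length xs" by simp
    then have e: "xs = take n xs @ xs!n # drop (Suc n) xs" by (rule id_take_nth_drop)
    then have "g = sum_list (take n xs) + (xs!n + sum_list (drop (Suc n) xs))" using xs
      by (metis sum_list_append sum_list.Cons)
    moreover have "sum_list (take n xs) \<in> W n" unfolding W_def using xs set_take_subset
      by (intro CollectI exI[of _ "take n xs"]) (use set_take_subset[of n xs] in auto)
    moreover have "sum_list (drop (Suc n) xs) \<in> W n" unfolding W_def using xs set_drop_subset len
      by (intro CollectI exI[of _ "drop (Suc n) xs"]) fastforce
    moreover have "xs!n \<in> Q" using xs \<open>n < length xs\<close> nth_mem by blast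
    ultimately show ?thesis by blast
  qed
qed

lemma sball_eq:
  assumes p: "p \<in> cosets H"
  shows "sball Q H n p = (\<lambda>g. act g p) ` W n"
proof -
  have "v \<in> cosets H \<Longrightarrow> sdist Q p v \<le> n \<longleftrightarrow> (\<exists>g\<in>W n. act g p = v)" for v
  proof -
    assume v: "v \<in> cosets H"
    obtain a where a: "p = (\<lambda>h. a + h) ` H" using p unfolding cosets_def by auto
    obtain b where b: "v = (\<lambda>h. b + h) ` H" using v unfolding cosets_def by auto
    have "act (b + - a) p = v" using a b by (simp add: act_coset add.assoc)
    obtain xs where xs: "set xs \<subseteq> Q" "sum_list xs = b + - a"
      using fsg unfolding fin_sym_gen_def generates_def by blast
    let ?P = "\<lambda>k. \<exists>xs. length xs = k \<and> set xs \<subseteq> Q \<and> act (sum_list (rev xs)) p = v"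
    have "?P (length (rev xs))" using xs \<open>act (b + - a) p = v\<close> by (intro exI[of _ "rev xs"]) auto
    then have P: "?P (sdist Q p v)" unfolding sdist_def by (rule LeastI)
    show ?thesis
    proof
      assume "sdist Q p v \<le> n"
      with P obtain ys where "length ys \<le> n" "set ys \<subseteq> Q" "act (sum_list (rev ys)) p = v" by metis
      then show "\<exists>g\<in>W n. act g p = v" unfolding W_def
        by (intro bexI[of _ "sum_list (rev ys)"] CollectI exI[of _ "rev ys"]) auto
    next
      assume "\<exists>g\<in>W n. act g p = v"
      then obtain ys where ys: "length ys \<le> n" "set ys \<subseteq> Q" "act (sum_list ys) p = v" unfolding W_def by auto
      have "?P (length (rev ys))" using ys by (intro exI[of _ "rev ys"]) auto
      then have "sdist Q p v \<le> length (rev ys)" unfolding sdist_def by (rule Least_le)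
      then show "sdist Q p v \<le> n" using ys by simp
    qed
  qed
  then show ?thesis unfolding sball_def using cosets_act[OF p] by auto
qed

end

context gq begin

lemma stab_eq_iff: "act a p = act b p \<longleftrightarrow> -b + a \<in> stab p"
  using act_eq unfolding stab_def by auto

lemma ball_iso_imp:
  assumes p: "p \<in> cosets H" and p': "p' \<in> cosets H" and bi: "ball_iso Q H n p p'"
  shows "S n p = S n p'"
proof -
  let ?B = "(\<lambda>g. act g p) ` W n" and ?B' = "(\<lambda>g. act g p') ` W n"
  obtain f where bij: "bij_betw f ?B ?B'" and fp: "f p = p'" and
    edge: "\<forall>u\<in>?B. \<forall>v\<in>?B. \<forall>q\<in>Q. v = act q u \<longleftrightarrow> f v = act q (f u)"
    using bi unfolding ball_iso_def sball_eq[OF p] sball_eq[OF p'] by blast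
  have fa: "length xs \<le> n \<longrightarrow> set xs \<subseteq> Q \<longrightarrow> f (act (sum_list xs) p) = act (sum_list xs) p'" for xs
  proof (induction xs)
    case Nil
    then show ?case using fp by simp
  next
    case (Cons q ys)
    show ?case
    proof (intro impI)
      assume l: "length (q # ys) \<le> n" and s: "set (q # ys) \<subseteq> Q"
      have u: "act (sum_list ys) p \<in> ?B" unfolding W_def using l s
        by (intro imageI CollectI exI[of _ "ys"]) auto
      have v: "act (sum_list (q#ys)) p \<in> ?B" unfolding W_def using l s
        by (intro imageI CollectI exI[of _ "q#ys"]) auto
      have "act (sum_list (q#ys)) p = act q (act (sum_list ys) p)" by (simp add: act_add)
      moreover have "q \<in> Q" using s by simp
      ultimately have "f (act (sum_list (q#ys)) p) = act q (f (act (sum_list ys) p))"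
        using bspec[OF bspec[OF bspec[OF edge u] v] \<open>q \<in> Q\<close>] by simp
      also have "\<dots> = act (sum_list (q#ys)) p'" using Cons l s by (simp add: act_add)
      finally show "f (act (sum_list (q # ys)) p) = act (sum_list (q # ys)) p'" .
    qed
  qed
  have fW: "a \<in> W n \<Longrightarrow> f (act a p) = act a p'" for a
    using fa unfolding W_def by auto
  have inj: "inj_on f ?B" using bij bij_betw_def by blast
  have key: "g \<in> stab p \<longleftrightarrow> g \<in> stab p'" if g: "g \<in> D n" for g
  proof -
    obtain L R where L: "L \<in> W n" and R: "R \<in> W n" and
      c: "g = L + R \<or> (\<exists>q\<in>Q. g = L + (q + R))"
      using W_split[OF g[unfolded D_def]] by blast
    have mL: "-L \<in> W n" using W_uminus L .
    show ?thesis using c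
    proof
      assume gLR: "g = L + R"
      have "g \<in> stab r \<longleftrightarrow> act R r = act (-L) r" for r
      proof -
        have "act R r = act (-L) r \<longleftrightarrow> -(-L) + R \<in> stab r" by (rule stab_eq_iff)
        then show ?thesis using gLR by (metis minus_minus)
      qed
      moreover have "act R p = act (-L) p \<longleftrightarrow> act R p' = act (-L) p'"
      proof -
        have m1: "act R p \<in> ?B" using R by blast
        have m2: "act (-L) p \<in> ?B" using mL by blast
        have "act R p = act (-L) p \<longleftrightarrow> f (act R p) = f (act (-L) p)"
          using inj_on_eq_iff[OF inj m1 m2] by simp
        then show ?thesis by (simp only: fW[OF R] fW[OF mL])
      qed
      ultimately show ?thesis by simp
    next
      assume "\<exists>q\<in>Q. g = L + (q + R)"
      then obtain q where q: "q \<in> Q" and gLR: "g = L + (q + R)" by blast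
      have "g \<in> stab r \<longleftrightarrow> act (-L) r = act q (act R r)" for r
      proof -
        have "act (q + R) r = act (-L) r \<longleftrightarrow> -(-L) + (q + R) \<in> stab r" by (rule stab_eq_iff)
        then show ?thesis using gLR by (metis minus_minus act_add)
      qed
      moreover have "act (-L) p = act q (act R p) \<longleftrightarrow> act (-L) p' = act q (act R p')"
      proof -
        have u: "act R p \<in> ?B" using R by blast
        have v: "act (-L) p \<in> ?B" using mL by blast
        have "act (-L) p = act q (act R p) \<longleftrightarrow> f (act (-L) p) = act q (f (act R p))"
          using edge u v q by blast
        then show ?thesis by (simp only: fW[OF R] fW[OF mL])
      qed
      ultimately show ?thesis by simp
    qed
  qed
  show ?thesis unfolding S_def using key by auto
qed

end

context gq begin
lemma ball_iso_if:
  assumes p: "p \<in> cosets H" and p': "p' \<in> cosets H" and SS: "S n p = S n p'"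
  shows "ball_iso Q H n p p'"
proof -
  let ?B = "(\<lambda>g. act g p) ` W n" and ?B' = "(\<lambda>g. act g p') ` W n"
  have tr: "a \<in> W (2*n+1) \<Longrightarrow> a \<in> stab p \<longleftrightarrow> a \<in> stab p'" for a
    using SS unfolding S_def D_def by auto
  have eqv: "act a p = act b p \<longleftrightarrow> act a p' = act b p'" if "a \<in> W n" "b \<in> W n" for a b
  proof -
    have "-b + a \<in> W (n + n)" using W_add[OF W_uminus[OF that(2)] that(1)] .
    then have "-b + a \<in> W (2*n+1)" using W_mono[of "n+n" "2*n+1"] by auto
    then show ?thesis using tr[of "-b + a"] stab_eq_iff[of a p b] stab_eq_iff[of a p' b] by simp
  qed
  have edg: "act b p = act q (act a p) \<longleftrightarrow> act b p' = act q (act a p')"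
    if "a \<in> W n" "b \<in> W n" "q \<in> Q" for a b q
  proof -
    have "-b + (q + a) \<in> W (n + (1 + n))" using W_add[OF W_uminus[OF that(2)] W_add[OF W_Q[OF that(3)] that(1)]] .
    moreover have "n + (1 + n) = 2*n+1" by simp
    ultimately have "-b + (q + a) \<in> W (2*n+1)" by metis
    then have "act (q + a) p = act b p \<longleftrightarrow> act (q + a) p' = act b p'"
      using tr[of "-b + (q + a)"] stab_eq_iff[of "q + a" p b] stab_eq_iff[of "q + a" p' b] by simp
    then show ?thesis by (metis act_add)
  qed
  define f where "f v = act (SOME a. a \<in> W n \<and> act a p = v) p'" for v
  have fW: "f (act a p) = act a p'" if a: "a \<in> W n" for a
  proof -
    have "\<exists>a'. a' \<in> W n \<and> act a' p = act a p" using a by blast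
    then have h: "(SOME a'. a' \<in> W n \<and> act a' p = act a p) \<in> W n \<and>
       act (SOME a'. a' \<in> W n \<and> act a' p = act a p) p = act a p" by (rule someI_ex)
    define a' where "a' = (SOME a'. a' \<in> W n \<and> act a' p = act a p)"
    have a'W: "a' \<in> W n" and a'e: "act a' p = act a p" using h unfolding a'_def by auto
    have "f (act a p) = act a' p'" unfolding f_def a'_def by (rule refl)
    also have "\<dots> = act a p'" using eqv[OF a'W a] a'e by simp
    finally show ?thesis .
  qed
  have inj: "inj_on f ?B"
  proof (rule inj_onI)
    fix x y assume "x \<in> ?B" "y \<in> ?B" "f x = f y"
    then obtain a b where a: "a \<in> W n" and b: "b \<in> W n" and x: "x = act a p" and y: "y = act b p" by blast
    have "act a p' = act b p'" using \<open>f x = f y\<close> unfolding x y fW[OF a] fW[OF b] .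
    then show "x = y" unfolding x y using eqv[OF a b] by simp
  qed
  have img: "f ` ?B = ?B'"
  proof -
    have "f ` ?B = (\<lambda>a. f (act a p)) ` W n" by (simp only: image_image)
    also have "\<dots> = ?B'" using fW by (rule image_cong[OF refl])
    finally show ?thesis .
  qed
  have "bij_betw f ?B ?B'" unfolding bij_betw_def using inj img by (rule conjI)
  moreover have "f p = p'" using fW[of 0] by simp
  moreover have "\<forall>u\<in>?B. \<forall>v\<in>?B. \<forall>q\<in>Q. v = act q u \<longleftrightarrow> f v = act q (f u)"
  proof (intro ballI)
    fix u v q assume "u \<in> ?B" "v \<in> ?B" "q \<in> Q"
    then obtain a b where a: "a \<in> W n" and b: "b \<in> W n" and u: "u = act a p" and v: "v = act b p" by blast
    show "v = act q u \<longleftrightarrow> f v = act q (f u)" unfolding u v fW[OF a] fW[OF b] using edg[OF a b \<open>q \<in> Q\<close>] .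
  qed
  ultimately show ?thesis unfolding ball_iso_def sball_eq[OF p] sball_eq[OF p'] by (intro exI[of _ f]) simp
qed

lemma ball_iso_iff: "p \<in> cosets H \<Longrightarrow> p' \<in> cosets H \<Longrightarrow> ball_iso Q H n p p' \<longleftrightarrow> S n p = S n p'"
  using ball_iso_imp ball_iso_if by blast

lemma cls_eq: "p \<in> cosets H \<Longrightarrow> cls Q H n p = {p' \<in> cosets H. S n p' = S n p}"
  unfolding cls_def using ball_iso_iff by auto

lemma cls_eq_iff: "p \<in> cosets H \<Longrightarrow> p' \<in> cosets H \<Longrightarrow> cls Q H n p = cls Q H n p' \<longleftrightarrow> S n p = S n p'"
  by (auto simp: cls_eq set_eq_iff)

lemma self_cls: "p \<in> cosets H \<Longrightarrow> p \<in> cls Q H n p" by (simp add: cls_eq)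

end

context gq begin

definition sig :: "(nat \<Rightarrow> 'g set set) \<Rightarrow> 'g set" where
  "sig x = {g. \<exists>n. g \<in> D n \<and> g \<in> stab (rep x n)}"

lemma S_mono: "n \<le> m \<Longrightarrow> S n p = S m p \<inter> D n"
  unfolding S_def using D_mono by blast

lemma G0_rep:
  assumes x: "x \<in> G0 Q H"
  shows "rep x n \<in> cosets H \<and> x n = cls Q H n (rep x n)"
proof -
  have "x n \<in> En Q H n" using x unfolding G0_def by blast
  then obtain p0 where p0: "p0 \<in> cosets H" "x n = cls Q H n p0" unfolding En_def by blast
  then have "p0 \<in> x n" using self_cls by simp
  then have "rep x n \<in> x n" unfolding rep_def by (rule someI)
  then have r: "rep x n \<in> cosets H" "S n (rep x n) = S n p0" using p0 cls_eq by auto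
  then show ?thesis using p0 cls_eq_iff by metis
qed

lemma G0_consist:
  assumes x: "x \<in> G0 Q H"
  shows "S n (rep x (Suc n)) = S n (rep x n)"
proof -
  obtain p where p: "p \<in> cosets H" "x (Suc n) = cls Q H (Suc n) p" "x n = cls Q H n p"
    using x unfolding G0_def by blast
  have "S (Suc n) (rep x (Suc n)) = S (Suc n) p" using G0_rep[OF x] p cls_eq_iff by metis
  then have "S n (rep x (Suc n)) = S n p" using S_mono[of n "Suc n"] by simp
  moreover have "S n (rep x n) = S n p" using G0_rep[OF x] p cls_eq_iff by metis
  ultimately show ?thesis by simp
qed

lemma G0_consist2:
  assumes x: "x \<in> G0 Q H" and nm: "n \<le> m"
  shows "S n (rep x m) = S n (rep x n)"
  using nm
proof (induction m rule: dec_induct)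
  case base
  then show ?case by simp
next
  case (step m)
  have "S n (rep x (Suc m)) = S m (rep x (Suc m)) \<inter> D n" using S_mono step by simp
  also have "\<dots> = S m (rep x m) \<inter> D n" using G0_consist[OF x] by simp
  also have "\<dots> = S n (rep x m)" using S_mono step by simp
  finally show ?case using step by simp
qed

lemma sig_D:
  assumes x: "x \<in> G0 Q H"
  shows "sig x \<inter> D n = S n (rep x n)"
proof
  show "sig x \<inter> D n \<subseteq> S n (rep x n)"
  proof
    fix g assume g: "g \<in> sig x \<inter> D n"
    then obtain m where m: "g \<in> D m" "g \<in> stab (rep x m)" unfolding sig_def by blast
    define k where "k = max m n"
    have "g \<in> S m (rep x m)" using m unfolding S_def by blast
    also have "\<dots> = S m (rep x k)" using G0_consist2[OF x, of m k] unfolding k_def by simp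
    finally have "g \<in> stab (rep x k)" unfolding S_def by blast
    then have "g \<in> S n (rep x k)" using g unfolding S_def by blast
    also have "\<dots> = S n (rep x n)" using G0_consist2[OF x, of n k] unfolding k_def by simp
    finally show "g \<in> S n (rep x n)" .
  qed
  show "S n (rep x n) \<subseteq> sig x \<inter> D n" unfolding S_def sig_def by blast
qed

lemma sig_inj:
  assumes x: "x \<in> G0 Q H" and y: "y \<in> G0 Q H" and e: "sig x = sig y"
  shows "x = y"
proof
  fix n
  have "S n (rep x n) = S n (rep y n)" using sig_D[OF x] sig_D[OF y] e by simp
  then show "x n = y n" using G0_rep[OF x] G0_rep[OF y] cls_eq_iff by metis
qed

lemma sig_eqI: "(\<And>n. A \<inter> D n = B \<inter> D n) \<Longrightarrow> A = B"
proof
  assume h: "\<And>n. A \<inter> D n = B \<inter> D n"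
  show "A \<subseteq> B" using h D_ex by blast
  show "B \<subseteq> A" using h D_ex by blast
qed

lemma build:
  assumes r: "\<And>n. r n \<in> cosets H" and Sr: "\<And>n. S n (r n) = K \<inter> D n"
  shows "(\<lambda>n. cls Q H n (r n)) \<in> G0 Q H \<and> sig (\<lambda>n. cls Q H n (r n)) = K"
proof -
  let ?x = "\<lambda>n. cls Q H n (r n)"
  have "?x n \<in> En Q H n" for n using r unfolding En_def by blast
  moreover have "\<exists>p \<in> cosets H. ?x (Suc n) = cls Q H (Suc n) p \<and> ?x n = cls Q H n p" for n
  proof (intro bexI[of _ "r (Suc n)"] conjI)
    have "S n (r (Suc n)) = S (Suc n) (r (Suc n)) \<inter> D n" using S_mono[of n "Suc n"] by simp
    also have "\<dots> = K \<inter> D n" using Sr D_mono[of n "Suc n"] by auto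
    finally have "S n (r (Suc n)) = S n (r n)" using Sr by simp
    then show "?x n = cls Q H n (r (Suc n))" using cls_eq_iff r by metis
  qed (use r in auto)
  ultimately have x: "?x \<in> G0 Q H" unfolding G0_def by blast
  have "rep ?x n \<in> ?x n" for n
    unfolding rep_def using self_cls[OF r] by (rule someI)
  then have "S n (rep ?x n) = S n (r n)" for n using cls_eq r by auto
  then have "sig ?x \<inter> D n = K \<inter> D n" for n using sig_D[OF x] Sr by simp
  then show ?thesis using x sig_eqI by blast
qed

lemma sig_image: "K \<in> sig ` G0 Q H \<longleftrightarrow> (\<forall>n. \<exists>p\<in>cosets H. K \<inter> D n = S n p)"
proof
  assume "K \<in> sig ` G0 Q H"
  then obtain x where "x \<in> G0 Q H" "K = sig x" by blast
  then show "\<forall>n. \<exists>p\<in>cosets H. K \<inter> D n = S n p" using sig_D G0_rep by blast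
next
  assume "\<forall>n. \<exists>p\<in>cosets H. K \<inter> D n = S n p"
  then obtain r where "\<And>n. r n \<in> cosets H" "\<And>n. K \<inter> D n = S n (r n)" by metis
  then show "K \<in> sig ` G0 Q H" using build[of r H K] by (metis image_eqI)
qed

lemma G0_cls_iff:
  assumes x: "x \<in> G0 Q H" and p: "p \<in> cosets H"
  shows "x N = cls Q H N p \<longleftrightarrow> sig x \<inter> D N = S N p"
  using G0_rep[OF x] sig_D[OF x] cls_eq_iff p by metis

lemma arr_rel_iff:
  assumes x: "x \<in> G0 Q H"
  shows "arr_rel x g g' \<longleftrightarrow> -g' + g \<in> sig x"
proof
  assume "arr_rel x g g'"
  then obtain N where N: "\<forall>n\<ge>N. act g (rep x n) = act g' (rep x n)" unfolding arr_rel_def by blast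
  obtain M where M: "\<forall>n\<ge>M. -g' + g \<in> D n" using D_ge by blast
  define n where "n = max N M"
  have "act g (rep x n) = act g' (rep x n)" using N unfolding n_def by auto
  then have "-g' + g \<in> stab (rep x n)" using stab_eq_iff by blast
  moreover have "-g' + g \<in> D n" using M unfolding n_def by auto
  ultimately show "-g' + g \<in> sig x" unfolding sig_def by blast
next
  assume a: "-g' + g \<in> sig x"
  obtain M where M: "\<forall>n\<ge>M. -g' + g \<in> D n" using D_ge by blast
  have "act g (rep x n) = act g' (rep x n)" if "n \<ge> M" for n
  proof -
    have "-g' + g \<in> sig x \<inter> D n" using a M that by blast
    then have "-g' + g \<in> S n (rep x n)" using sig_D[OF x] by simp
    then show ?thesis using stab_eq_iff unfolding S_def by blast
  qed
  then show "arr_rel x g g'" unfolding arr_rel_def by blast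
qed

lemma mk_arr_eq: "x \<in> G0 Q H \<Longrightarrow> mk_arr x g = (x, cl (sig x) g)"
  unfolding mk_arr_def cl_def using arr_rel_iff by auto

lemma pt_act_G0:
  assumes x: "x \<in> G0 Q H"
  shows "pt_act Q H g x \<in> G0 Q H \<and> sig (pt_act Q H g x) = conj g (sig x)"
proof -
  define l where "l = wlen Q g"
  define r where "r n = act g (rep x (n + l))" for n
  have gl: "g \<in> W l" unfolding l_def by (rule W_wlen)
  have r: "r n \<in> cosets H" for n unfolding r_def using G0_rep[OF x] cosets_act by blast
  have Sr: "S n (r n) = conj g (sig x) \<inter> D n" for n
  proof -
    have "h \<in> S n (r n) \<longleftrightarrow> h \<in> conj g (sig x) \<inter> D n" for h
    proof (cases "h \<in> D n")
      case True
      have "-g + h + g \<in> W (l + (2*n+1) + l)"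
        using W_add[OF W_add[OF W_uminus[OF gl] True[unfolded D_def]] gl] .
      moreover have "l + (2*n+1) + l = 2*(n+l)+1" by simp
      ultimately have "-g + h + g \<in> D (n + l)" unfolding D_def by metis
      then have "-g + h + g \<in> sig x \<longleftrightarrow> -g + h + g \<in> S (n+l) (rep x (n+l))"
        using sig_D[OF x, of "n+l"] by blast
      also have "\<dots> \<longleftrightarrow> -g + h + g \<in> stab (rep x (n+l))"
        using \<open>-g + h + g \<in> D (n + l)\<close> unfolding S_def by blast
      also have "\<dots> \<longleftrightarrow> h \<in> stab (r n)" unfolding r_def stab_act by simp
      finally show ?thesis using True by (simp add: S_def conj_iff)
    next
      case False
      then show ?thesis unfolding S_def by blast
    qed
    then show ?thesis by blast
  qed
  have "pt_act Q H g x = (\<lambda>n. cls Q H n (r n))"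
    unfolding pt_act_def r_def l_def by simp
  then show ?thesis using build[OF r Sr] by simp
qed

end

lemma gen_pre:
  assumes B: "\<forall>V\<in>B'. \<exists>U. generate_topology_on B U \<and> f -` V \<inter> X = U \<inter> X"
    and V: "generate_topology_on B' V"
  shows "\<exists>U. generate_topology_on B U \<and> f -` V \<inter> X = U \<inter> X"
  using V
proof (induction rule: generate_topology_on.induct)
  case Empty
  then show ?case by (intro exI[of _ "{}"]) (auto intro: generate_topology_on.Empty)
next
  case (Int a b)
  then obtain U1 U2 where "generate_topology_on B U1" "f -` a \<inter> X = U1 \<inter> X"
    "generate_topology_on B U2" "f -` b \<inter> X = U2 \<inter> X" by blast
  then show ?case by (intro exI[of _ "U1 \<inter> U2"]) (auto intro: generate_topology_on.Int)
next
  case (UN K)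
  then obtain u where u: "\<And>k. k \<in> K \<Longrightarrow> generate_topology_on B (u k) \<and> f -` k \<inter> X = u k \<inter> X"
    by metis
  have "generate_topology_on B (\<Union>(u ` K))"
    by (rule generate_topology_on.UN) (use u in auto)
  moreover have "f -` \<Union>K \<inter> X = \<Union>(u ` K) \<inter> X" using u by blast
  ultimately show ?case by blast
next
  case (Basis s)
  then show ?case using B by blast
qed

lemma cont_gen:
  assumes fXY: "f ` X \<subseteq> Y" and XB: "X \<subseteq> \<Union>B" and YB: "Y \<subseteq> \<Union>B'"
    and B: "\<forall>V\<in>B'. \<exists>U. generate_topology_on B U \<and> f -` V \<inter> X = U \<inter> X"
  shows "continuous_map (subtopology (topology_generated_by B) X) (subtopology (topology_generated_by B') Y) f"
  unfolding continuous_map_def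
proof (intro conjI allI impI)
  show "f \<in> topspace (subtopology (topology_generated_by B) X) \<rightarrow> topspace (subtopology (topology_generated_by B') Y)"
    using fXY XB YB by auto
  fix S assume "openin (subtopology (topology_generated_by B') Y) S"
  then obtain V where V: "generate_topology_on B' V" "S = V \<inter> Y"
    unfolding openin_subtopology openin_topology_generated_by_iff by blast
  obtain U where U: "generate_topology_on B U" "f -` V \<inter> X = U \<inter> X" using gen_pre[OF B V(1)] by blast
  have ts: "topspace (subtopology (topology_generated_by B) X) = X" using XB by auto
  have "{x \<in> X. f x \<in> S} = f -` V \<inter> X" using V(2) fXY by blast
  then have "{x \<in> topspace (subtopology (topology_generated_by B) X). f x \<in> S} = U \<inter> X"
    unfolding ts using U(2) by simp
  then show "openin (subtopology (topology_generated_by B) X) {x \<in> topspace (subtopology (topology_generated_by B) X). f x \<in> S}"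
    unfolding openin_subtopology openin_topology_generated_by_iff using U by blast
qed

lemma homeo_gen:
  assumes bij: "bij_betw f X Y" and XB: "X \<subseteq> \<Union>B" and YB: "Y \<subseteq> \<Union>B'"
    and BX: "\<forall>U\<in>B. U \<subseteq> X" and BB: "(\<lambda>U. f ` U) ` B = B'"
  shows "homeomorphic_map (subtopology (topology_generated_by B) X) (subtopology (topology_generated_by B') Y) f"
proof -
  define g where "g = inv_into X f"
  have inj: "inj_on f X" using bij by (rule bij_betw_imp_inj_on)
  have img: "f ` X = Y" using bij by (rule bij_betw_imp_surj_on)
  have gf: "\<And>x. x \<in> X \<Longrightarrow> g (f x) = x" unfolding g_def using inj by simp
  have fg: "\<And>y. y \<in> Y \<Longrightarrow> f (g y) = y" unfolding g_def using img f_inv_into_f[of _ f X] by blast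
  have gY: "g ` Y \<subseteq> X" unfolding g_def using img inv_into_into[of _ f X] by blast
  have c1: "continuous_map (subtopology (topology_generated_by B) X) (subtopology (topology_generated_by B') Y) f"
  proof (rule cont_gen[OF _ XB YB])
    show "f ` X \<subseteq> Y" using img by simp
    show "\<forall>V\<in>B'. \<exists>U. generate_topology_on B U \<and> f -` V \<inter> X = U \<inter> X"
    proof
      fix V assume "V \<in> B'"
      then obtain U where U: "U \<in> B" "V = f ` U" using BB by blast
      have "f -` V \<inter> X = U \<inter> X" using U BX inj unfolding inj_on_def by blast
      then show "\<exists>U. generate_topology_on B U \<and> f -` V \<inter> X = U \<inter> X"
        using U generate_topology_on.Basis by blast
    qed
  qed
  have c2: "continuous_map (subtopology (topology_generated_by B') Y) (subtopology (topology_generated_by B) X) g"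
  proof (rule cont_gen[OF gY YB XB])
    show "\<forall>V\<in>B. \<exists>U. generate_topology_on B' U \<and> g -` V \<inter> Y = U \<inter> Y"
    proof
      fix V assume V: "V \<in> B"
      then have "f ` V \<in> B'" using BB by blast
      moreover have "g -` V \<inter> Y = f ` V \<inter> Y"
      proof
        show "g -` V \<inter> Y \<subseteq> f ` V \<inter> Y"
        proof
          fix y assume "y \<in> g -` V \<inter> Y"
          then have "g y \<in> V" "y \<in> Y" by auto
          then show "y \<in> f ` V \<inter> Y" using fg[of y] by (metis IntI imageI)
        qed
        show "f ` V \<inter> Y \<subseteq> g -` V \<inter> Y"
        proof
          fix y assume "y \<in> f ` V \<inter> Y"
          then obtain v where "v \<in> V" "y = f v" "y \<in> Y" by blast
          moreover have "v \<in> X" using \<open>v \<in> V\<close> V BX by blast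
          ultimately show "y \<in> g -` V \<inter> Y" using gf by simp
        qed
      qed
      ultimately show "\<exists>U. generate_topology_on B' U \<and> g -` V \<inter> Y = U \<inter> Y"
        using generate_topology_on.Basis by blast
    qed
  qed
  have "homeomorphic_maps (subtopology (topology_generated_by B) X) (subtopology (topology_generated_by B') Y) f g"
    unfolding homeomorphic_maps_def topspace_subtopology topology_generated_by_topspace
    using c1 c2 gf fg by blast
  then show ?thesis using homeomorphic_map_maps by blast
qed

lemma topspace_Sub_top: "topspace Sub_top = {H. is_subgroup H}"
  unfolding Sub_top_def topspace_pullback_topology by (auto simp: PiE_iff)

lemma open_nbhd:
  assumes F: "finite F"
  shows "openin Sub_top {K \<in> topspace Sub_top. K \<inter> F = K0 \<inter> F}"
proof -
  define X where "X i = (if i \<in> F then {b. b = (i \<in> K0)} else UNIV)" for i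
  have op: "openin (product_topology (\<lambda>_. discrete_topology (UNIV::bool set)) UNIV) (PiE UNIV X)"
  proof (rule product_topology_basis)
    show "openin (discrete_topology UNIV) (X i)" for i by simp
    have "{i. X i \<noteq> topspace (discrete_topology UNIV)} \<subseteq> F" unfolding X_def by auto
    then show "finite {i. X i \<noteq> topspace (discrete_topology UNIV)}" using F finite_subset by blast
  qed
  have "{K \<in> topspace Sub_top. K \<inter> F = K0 \<inter> F} = (\<lambda>H x. x \<in> H) -` (PiE UNIV X) \<inter> {H. is_subgroup H}"
  proof (intro set_eqI iffI)
    fix K assume "K \<in> {K \<in> topspace Sub_top. K \<inter> F = K0 \<inter> F}"
    then have K: "is_subgroup K" "K \<inter> F = K0 \<inter> F" unfolding topspace_Sub_top by auto
    have "(\<lambda>x. x \<in> K) \<in> PiE UNIV X"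
    proof (unfold PiE_UNIV_domain, rule Pi_I)
      fix i show "(i \<in> K) \<in> X i" using K(2) unfolding X_def by auto
    qed
    then show "K \<in> (\<lambda>H x. x \<in> H) -` (PiE UNIV X) \<inter> {H. is_subgroup H}" using K by simp
  next
    fix K assume "K \<in> (\<lambda>H x. x \<in> H) -` (PiE UNIV X) \<inter> {H. is_subgroup H}"
    then have K: "is_subgroup K" "\<And>i. (i \<in> K) \<in> X i" by (auto simp: PiE_UNIV_domain)
    have "K \<inter> F = K0 \<inter> F"
    proof (intro set_eqI)
      fix i show "i \<in> K \<inter> F \<longleftrightarrow> i \<in> K0 \<inter> F" using K(2)[of i] unfolding X_def by (cases "i \<in> F") auto
    qed
    then show "K \<in> {K \<in> topspace Sub_top. K \<inter> F = K0 \<inter> F}" using K unfolding topspace_Sub_top by simp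
  qed
  then show ?thesis unfolding Sub_top_def openin_pullback_topology using op by blast
qed

context gq begin

lemma URS_sub: "URS Z \<Longrightarrow> H \<in> Z \<Longrightarrow> is_subgroup H"
  unfolding URS_def topspace_Sub_top by blast

lemma transfer:
  assumes Z: "URS Z" and H: "H \<in> Z" and H': "H' \<in> Z" and p: "p \<in> cosets H"
  shows "\<exists>p'\<in>cosets H'. S n p' = S n p"
proof -
  obtain a where a: "p = (\<lambda>h. a + h) ` H" using p unfolding cosets_def by blast
  have sp: "stab p = conj a H" using stab_coset[OF URS_sub[OF Z H]] a by simp
  have inZ: "conj a H \<in> Z" using Z H unfolding URS_def by blast
  then have cl: "conj a H \<in> Sub_top closure_of (range (\<lambda>g. conj g H'))" using Z H' unfolding URS_def by blast
  have ts: "conj a H \<in> topspace Sub_top" using inZ Z unfolding URS_def by blast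
  define Onb where "Onb = {K \<in> topspace Sub_top. K \<inter> D n = conj a H \<inter> D n}"
  have op: "openin Sub_top Onb" unfolding Onb_def using open_nbhd[OF finite_D] .
  have mem: "conj a H \<in> Onb" unfolding Onb_def using ts by blast
  have "\<forall>T. conj a H \<in> T \<and> openin Sub_top T \<longrightarrow> (\<exists>y. y \<in> range (\<lambda>g. conj g H') \<and> y \<in> T)"
    using cl unfolding in_closure_of by (rule conjunct2)
  then have "\<exists>y. y \<in> range (\<lambda>g. conj g H') \<and> y \<in> Onb" using op mem by blast
  then obtain y where "y \<in> range (\<lambda>g. conj g H')" "y \<inter> D n = conj a H \<inter> D n"
    unfolding Onb_def by blast
  then obtain b where b: "conj b H' \<inter> D n = conj a H \<inter> D n" by blast
  define p' where "p' = (\<lambda>h. b + h) ` H'"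
  have "p' \<in> cosets H'" unfolding p'_def cosets_def by blast
  moreover have "stab p' = conj b H'" using stab_coset[OF URS_sub[OF Z H']] p'_def by simp
  ultimately show ?thesis using b sp unfolding S_def by auto
qed

definition BO :: "'g set \<Rightarrow> 'g set \<Rightarrow> nat \<Rightarrow> 'g \<Rightarrow> 'g arrow set" where
  "BO H T N g = (\<lambda>x. (x, cl (sig x) g)) ` {x \<in> G0 Q H. sig x \<inter> D N = T}"

lemma arrows_eq: "arrows Q H = {(x, cl (sig x) g) | x g. x \<in> G0 Q H}"
proof (intro set_eqI iffI)
  fix a assume "a \<in> arrows Q H"
  then obtain x g where x: "x \<in> G0 Q H" and "a = mk_arr x g" unfolding arrows_def by blast
  then have "a = (x, cl (sig x) g)" using mk_arr_eq[OF x] by simp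
  then show "a \<in> {(x, cl (sig x) g) | x g. x \<in> G0 Q H}" using x by blast
next
  fix a assume "a \<in> {(x, cl (sig x) g) | x g. x \<in> G0 Q H}"
  then obtain x g where x: "x \<in> G0 Q H" and "a = (x, cl (sig x) g)" by blast
  then have "a = mk_arr x g" using mk_arr_eq[OF x] by simp
  then show "a \<in> arrows Q H" unfolding arrows_def using x by blast
qed

lemma basic_opens_eq:
  "basic_opens Q H = {BO H (S N p0) N g | N p0 g. p0 \<in> cosets H \<and> wlen Q g \<le> N}"
proof -
  have e: "{a \<in> arrows Q H. \<exists>x. a = mk_arr x g \<and> x N = cls Q H N p0} = BO H (S N p0) N g"
    if p0: "p0 \<in> cosets H" for N p0 g
  proof
    show "{a \<in> arrows Q H. \<exists>x. a = mk_arr x g \<and> x N = cls Q H N p0} \<subseteq> BO H (S N p0) N g"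
    proof
      fix a assume "a \<in> {a \<in> arrows Q H. \<exists>x. a = mk_arr x g \<and> x N = cls Q H N p0}"
      then obtain x x0 g0 where x0: "x0 \<in> G0 Q H" "a = mk_arr x0 g0" "a = mk_arr x g" "x N = cls Q H N p0"
        unfolding arrows_def by blast
      then have "x = x0" unfolding mk_arr_def by simp
      then have x: "x \<in> G0 Q H" using x0 by simp
      have a: "a = (x, cl (sig x) g)" using mk_arr_eq[OF x] x0(3) by simp
      have "sig x \<inter> D N = S N p0" using G0_cls_iff[OF x p0] x0 by simp
      then show "a \<in> BO H (S N p0) N g" unfolding BO_def using a x by blast
    qed
    show "BO H (S N p0) N g \<subseteq> {a \<in> arrows Q H. \<exists>x. a = mk_arr x g \<and> x N = cls Q H N p0}"
    proof
      fix a assume "a \<in> BO H (S N p0) N g"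
      then obtain x where x: "x \<in> G0 Q H" "sig x \<inter> D N = S N p0" "a = (x, cl (sig x) g)"
        unfolding BO_def by blast
      then have "a = mk_arr x g" using mk_arr_eq[OF x(1)] by simp
      moreover have "x N = cls Q H N p0" using G0_cls_iff[OF x(1) p0] x(2) by simp
      ultimately show "a \<in> {a \<in> arrows Q H. \<exists>x. a = mk_arr x g \<and> x N = cls Q H N p0}"
        unfolding arrows_def using x(1) by blast
    qed
  qed
  show ?thesis
  proof (intro set_eqI iffI)
    fix U assume "U \<in> basic_opens Q H"
    then obtain N c g where U: "U = {a \<in> arrows Q H. \<exists>x. a = mk_arr x g \<and> x N = c}"
      and c: "c \<in> En Q H N" and g: "wlen Q g \<le> N" unfolding basic_opens_def by blast
    obtain p0 where p0: "p0 \<in> cosets H" "c = cls Q H N p0" using c unfolding En_def by blast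
    have "U = BO H (S N p0) N g" using U e[OF p0(1)] p0(2) by simp
    then show "U \<in> {BO H (S N p0) N g | N p0 g. p0 \<in> cosets H \<and> wlen Q g \<le> N}"
      using p0 g by blast
  next
    fix U assume "U \<in> {BO H (S N p0) N g | N p0 g. p0 \<in> cosets H \<and> wlen Q g \<le> N}"
    then obtain N p0 g where U: "U = BO H (S N p0) N g" and p0: "p0 \<in> cosets H" and g: "wlen Q g \<le> N"
      by blast
    have "U = {a \<in> arrows Q H. \<exists>x. a = mk_arr x g \<and> x N = cls Q H N p0}" using U e[OF p0] by simp
    moreover have "cls Q H N p0 \<in> En Q H N" unfolding En_def using p0 by blast
    ultimately show "U \<in> basic_opens Q H" unfolding basic_opens_def using g by blast
  qed
qed

lemma arrows_cover: "arrows Q H \<subseteq> \<Union>(basic_opens Q H)"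
proof
  fix a assume "a \<in> arrows Q H"
  then obtain x g where x: "x \<in> G0 Q H" and a: "a = (x, cl (sig x) g)" unfolding arrows_eq by blast
  define N where "N = wlen Q g"
  have "a \<in> BO H (S N (rep x N)) N g" unfolding BO_def using a x sig_D[OF x] by blast
  moreover have "BO H (S N (rep x N)) N g \<in> basic_opens Q H"
    unfolding basic_opens_eq N_def using G0_rep[OF x] by blast
  ultimately show "a \<in> \<Union>(basic_opens Q H)" by blast
qed

lemma basic_sub: "U \<in> basic_opens Q H \<Longrightarrow> U \<subseteq> arrows Q H"
  unfolding basic_opens_def by blast

end

theorem proposition3p2:
  fixes Q :: "'g::group_add set" and Z :: "'g set set" and H H' :: "'g set"
  assumes "fin_sym_gen Q"
    and "URS Z"
    and "H \<in> Z" and "H' \<in> Z"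
  shows "groupoids_isomorphic Q H H'"
proof -
  interpret gq Q using assms(1) by unfold_locales
  have tr1: "\<And>N p. p \<in> cosets H \<Longrightarrow> \<exists>p'\<in>cosets H'. S N p' = S N p"
    using transfer[OF assms(2) assms(3) assms(4)] by blast
  have tr2: "\<And>N p. p \<in> cosets H' \<Longrightarrow> \<exists>p'\<in>cosets H. S N p' = S N p"
    using transfer[OF assms(2) assms(4) assms(3)] by blast
  have img: "sig ` G0 Q H = sig ` G0 Q H'"
  proof (intro set_eqI)
    fix K
    have "(\<forall>n. \<exists>p\<in>cosets H. K \<inter> D n = S n p) \<longleftrightarrow> (\<forall>n. \<exists>p\<in>cosets H'. K \<inter> D n = S n p)"
    proof
      assume h: "\<forall>n. \<exists>p\<in>cosets H. K \<inter> D n = S n p"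
      show "\<forall>n. \<exists>p\<in>cosets H'. K \<inter> D n = S n p"
      proof
        fix n
        obtain p where p: "p \<in> cosets H" "K \<inter> D n = S n p" using h by blast
        obtain p' where "p' \<in> cosets H'" "S n p' = S n p" using tr1[OF p(1)] by blast
        then show "\<exists>p\<in>cosets H'. K \<inter> D n = S n p" using p(2) by metis
      qed
    next
      assume h: "\<forall>n. \<exists>p\<in>cosets H'. K \<inter> D n = S n p"
      show "\<forall>n. \<exists>p\<in>cosets H. K \<inter> D n = S n p"
      proof
        fix n
        obtain p where p: "p \<in> cosets H'" "K \<inter> D n = S n p" using h by blast
        obtain p' where "p' \<in> cosets H" "S n p' = S n p" using tr2[OF p(1)] by blast
        then show "\<exists>p\<in>cosets H. K \<inter> D n = S n p" using p(2) by metis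
      qed
    qed
    then show "K \<in> sig ` G0 Q H \<longleftrightarrow> K \<in> sig ` G0 Q H'" by (simp only: sig_image)
  qed
  define Phi where "Phi x = inv_into (G0 Q H') sig (sig x)" for x
  have PhiG: "Phi x \<in> G0 Q H'" and Phis: "sig (Phi x) = sig x" if x: "x \<in> G0 Q H" for x
  proof -
    have "sig x \<in> sig ` G0 Q H'" using img x by blast
    then show "Phi x \<in> G0 Q H'" "sig (Phi x) = sig x" unfolding Phi_def
      by (simp_all add: inv_into_into f_inv_into_f)
  qed
  have Phi_inj: "inj_on Phi (G0 Q H)"
  proof (rule inj_onI)
    fix x y assume x: "x \<in> G0 Q H" and y: "y \<in> G0 Q H" and e: "Phi x = Phi y"
    have "sig x = sig y" using Phis[OF x] Phis[OF y] e by simp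
    then show "x = y" using sig_inj[OF x y] by simp
  qed
  have Phi_eqI: "Phi x = y" if x: "x \<in> G0 Q H" and y: "y \<in> G0 Q H'" and e: "sig x = sig y" for x y
    using sig_inj[OF PhiG[OF x] y] Phis[OF x] e by simp
  have Phi_sub: "Phi ` {x \<in> G0 Q H. sig x \<inter> D N = T} = {y \<in> G0 Q H'. sig y \<inter> D N = T}" for N T
  proof (intro set_eqI iffI)
    fix y assume "y \<in> Phi ` {x \<in> G0 Q H. sig x \<inter> D N = T}"
    then obtain x where x: "x \<in> G0 Q H" "sig x \<inter> D N = T" "y = Phi x" by blast
    then show "y \<in> {y \<in> G0 Q H'. sig y \<inter> D N = T}" using PhiG[OF x(1)] Phis[OF x(1)] by simp
  next
    fix y assume y: "y \<in> {y \<in> G0 Q H'. sig y \<inter> D N = T}"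
    then have "sig y \<in> sig ` G0 Q H" using img by blast
    then obtain x where x: "x \<in> G0 Q H" "sig x = sig y" by blast
    then have "Phi x = y" using Phi_eqI y by blast
    then show "y \<in> Phi ` {x \<in> G0 Q H. sig x \<inter> D N = T}" using x y by blast
  qed
  have Phi_pt: "Phi (pt_act Q H g x) = pt_act Q H' g (Phi x)" if x: "x \<in> G0 Q H" for x g
  proof -
    have a: "pt_act Q H g x \<in> G0 Q H" "sig (pt_act Q H g x) = conj g (sig x)"
      using pt_act_G0[OF x] by auto
    have b: "pt_act Q H' g (Phi x) \<in> G0 Q H'" "sig (pt_act Q H' g (Phi x)) = conj g (sig (Phi x))"
      using pt_act_G0[OF PhiG[OF x]] by auto
    show ?thesis using Phi_eqI[OF a(1) b(1)] a(2) b(2) Phis[OF x] by simp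
  qed
  define f where "f a = (Phi (fst a), snd a)" for a :: "'g arrow"
  have arrG: "fst a \<in> G0 Q H" if "a \<in> arrows Q H" for a
    using that unfolding arrows_eq by auto
  have f_mk: "f (mk_arr x g) = mk_arr (Phi x) g" if x: "x \<in> G0 Q H" for x g
    unfolding mk_arr_eq[OF x] mk_arr_eq[OF PhiG[OF x]] f_def Phis[OF x] by simp
  have elt_f: "elt (f a) = elt a" for a unfolding f_def elt_def by simp
  have bij: "bij_betw f (arrows Q H) (arrows Q H')"
    unfolding bij_betw_def
  proof
    show "inj_on f (arrows Q H)"
    proof (rule inj_onI)
      fix a b assume a: "a \<in> arrows Q H" and b: "b \<in> arrows Q H" and e: "f a = f b"
      have "fst a = fst b" using e Phi_inj arrG[OF a] arrG[OF b] unfolding f_def inj_on_def by simp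
      moreover have "snd a = snd b" using e unfolding f_def by simp
      ultimately show "a = b" by (rule prod_eqI)
    qed
    show "f ` arrows Q H = arrows Q H'"
    proof (intro set_eqI iffI)
      fix a' assume "a' \<in> f ` arrows Q H"
      then obtain x g where x: "x \<in> G0 Q H" and a': "a' = f (x, cl (sig x) g)" unfolding arrows_eq by blast
      have "a' = (Phi x, cl (sig (Phi x)) g)" using a' Phis[OF x] unfolding f_def by simp
      then show "a' \<in> arrows Q H'" unfolding arrows_eq using PhiG[OF x] by blast
    next
      fix a' assume "a' \<in> arrows Q H'"
      then obtain y g where y: "y \<in> G0 Q H'" and a': "a' = (y, cl (sig y) g)" unfolding arrows_eq by blast
      have "y \<in> Phi ` {x \<in> G0 Q H. sig x \<inter> D 0 = sig y \<inter> D 0}" unfolding Phi_sub using y by blast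
      then obtain x where x: "x \<in> G0 Q H" "y = Phi x" by blast
      have "a' = f (x, cl (sig x) g)" using a' x Phis[OF x(1)] unfolding f_def by simp
      then show "a' \<in> f ` arrows Q H" unfolding arrows_eq using x by blast
    qed
  qed
  have fBO: "f ` BO H T N g = BO H' T N g" for T N g
  proof -
    have "f ` BO H T N g = (\<lambda>x. (Phi x, cl (sig x) g)) ` {x \<in> G0 Q H. sig x \<inter> D N = T}"
      unfolding BO_def f_def image_image by simp
    also have "\<dots> = (\<lambda>y. (y, cl (sig y) g)) ` (Phi ` {x \<in> G0 Q H. sig x \<inter> D N = T})"
      unfolding image_image using Phis by (intro image_cong) auto
    also have "\<dots> = BO H' T N g" unfolding Phi_sub BO_def by simp
    finally show ?thesis .
  qed
  have BB: "(\<lambda>U. f ` U) ` basic_opens Q H = basic_opens Q H'"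
  proof (intro set_eqI iffI)
    fix U' assume "U' \<in> (\<lambda>U. f ` U) ` basic_opens Q H"
    then obtain N p0 g where p0: "p0 \<in> cosets H" and g: "wlen Q g \<le> N" and U': "U' = f ` BO H (S N p0) N g"
      unfolding basic_opens_eq by blast
    obtain p1 where p1: "p1 \<in> cosets H'" "S N p1 = S N p0" using tr1[OF p0] by blast
    have "U' = BO H' (S N p1) N g" using U' fBO p1(2) by simp
    then show "U' \<in> basic_opens Q H'" unfolding basic_opens_eq using p1(1) g by blast
  next
    fix U' assume "U' \<in> basic_opens Q H'"
    then obtain N p0 g where p0: "p0 \<in> cosets H'" and g: "wlen Q g \<le> N" and U': "U' = BO H' (S N p0) N g"
      unfolding basic_opens_eq by blast
    obtain p1 where p1: "p1 \<in> cosets H" "S N p1 = S N p0" using tr2[OF p0] by blast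
    have "U' = f ` BO H (S N p1) N g" using U' fBO p1(2) by simp
    moreover have "BO H (S N p1) N g \<in> basic_opens Q H" unfolding basic_opens_eq using p1(1) g by blast
    ultimately show "U' \<in> (\<lambda>U. f ` U) ` basic_opens Q H" by blast
  qed
  have homeo: "homeomorphic_map (Gtop Q H) (Gtop Q H') f"
    unfolding Gtop_def
    by (rule homeo_gen[OF bij arrows_cover arrows_cover _ BB]) (use basic_sub in blast)
  have src_f: "src Q H' (f a) = Phi (src Q H a)" if a: "a \<in> arrows Q H" for a
    unfolding src_def elt_f using Phi_pt[OF arrG[OF a]] unfolding f_def by simp
  have rng_f: "rng (f b) = Phi (rng b)" for b unfolding rng_def f_def by simp
  have comp: "(src Q H a = rng b \<longleftrightarrow> src Q H' (f a) = rng (f b)) \<and>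
        (src Q H a = rng b \<longrightarrow> f (gmul a b) = gmul (f a) (f b))"
    if a: "a \<in> arrows Q H" and b: "b \<in> arrows Q H" for a b
  proof
    have s: "src Q H a \<in> G0 Q H" unfolding src_def using pt_act_G0[OF arrG[OF a]] by blast
    have r: "rng b \<in> G0 Q H" unfolding rng_def using arrG[OF b] .
    show "src Q H a = rng b \<longleftrightarrow> src Q H' (f a) = rng (f b)"
      unfolding src_f[OF a] rng_f using inj_on_eq_iff[OF Phi_inj s r] by simp
    have "f (gmul a b) = mk_arr (Phi (fst a)) (elt b + elt a)"
      unfolding gmul_def using f_mk[OF arrG[OF a]] .
    also have "\<dots> = gmul (f a) (f b)" unfolding gmul_def elt_f by (simp add: f_def)
    finally show "src Q H a = rng b \<longrightarrow> f (gmul a b) = gmul (f a) (f b)" by simp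
  qed
  have "groupoid_iso Q H H' f" unfolding groupoid_iso_def using bij homeo comp by blast
  then show ?thesis unfolding groupoids_isomorphic_def by blast
qed

end
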